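(* Let $\mathcal{V}$ be a finite-dimensional inner product space with inner product $\langle\cdot,\cdot\rangle$ and distance $d(x,y)=\sqrt{\langle x-y,x-y\rangle}$, let $\mathcal{S}\subseteq\mathcal{V}$ be the state space and $U:\mathcal{S}\to\mathcal{S}$ a map such that $\mathcal{S}$ is bounded (there is $D$ with $d(s,t)<D$ for all $s,t\in\mathcal{S}$) and $\langle U(s),U(t)\rangle=\langle s,t\rangle$ for all $s,t\in\mathcal{S}$. Then the system is uniformly recurrent in metric: for every $\epsilon>0$ there is an integer $n>0$ such that $d(U(n)s,s)<\epsilon$ for all $s\in\mathcal{S}$.
   Context: $U(n)$ denotes the $n$-fold composition of $U$. *)

theory Defs
  imports "HOL-Analysis.Analysis"
begin

end

theory Submission
  imports Defs
begin

lemma iso_mem: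
  assumes "U ` S \<subseteq> S" "s \<in> S"
  shows "(U ^^ n) s \<in> S"
  using assms(2) by (induction n) (use assms(1) in auto)

lemma iso_iter:
  fixes S :: "'a::euclidean_space set" and U :: "'a \<Rightarrow> 'a"
  assumes "U ` S \<subseteq> S"
    and "\<forall>s\<in>S. \<forall>t\<in>S. inner (U s) (U t) = inner s t"
  shows "\<And>s. s \<in> S \<Longrightarrow> (U ^^ n) s \<in> S"
    and "\<And>s t. s \<in> S \<Longrightarrow> t \<in> S \<Longrightarrow> dist ((U ^^ n) s) ((U ^^ n) t) = dist s t"
proof -
  have d1: "dist (U s) (U t) = dist s t" if "s \<in> S" "t \<in> S" for s t
  proof -
    have "(dist (U s) (U t))^2 = (dist s t)^2"
      using assms(2) that
      by (simp add: dist_norm power2_norm_eq_inner inner_diff_left inner_diff_right inner_commute)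
    then show ?thesis by (simp add: power2_eq_iff_nonneg)
  qed
  show m: "(U ^^ n) s \<in> S" if "s \<in> S" for s
    using that by (induction n) (use assms(1) in auto)
  show "dist ((U ^^ n) s) ((U ^^ n) t) = dist s t" if "s \<in> S" "t \<in> S" for s t
    using that
  proof (induction n)
    case 0 then show ?case by simp
  next
    case (Suc n)
    have "(U ^^ n) s \<in> S" "(U ^^ n) t \<in> S" using iso_mem[OF assms(1)] Suc.prems by simp_all
    then show ?case using Suc d1 by simp
  qed
qed

theorem theorem6:
  fixes S :: "'a::euclidean_space set" and U :: "'a \<Rightarrow> 'a"
  assumes "U ` S \<subseteq> S"
    and "\<exists>D. \<forall>s\<in>S. \<forall>t\<in>S. dist s t < D"
    and "\<forall>s\<in>S. \<forall>t\<in>S. inner (U s) (U t) = inner s t"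
  shows "\<forall>\<epsilon>>0. \<exists>n::nat. n > 0 \<and> (\<forall>s\<in>S. dist ((U ^^ n) s) s < \<epsilon>)"
proof (intro allI impI)
  fix \<epsilon> :: real assume ep: "\<epsilon> > 0"
  define e where "e = \<epsilon> / 6"
  have e: "e > 0" using ep by (simp add: e_def)
  note mem = iso_iter(1)[OF assms(1) assms(3)]
  note iso = iso_iter(2)[OF assms(1) assms(3)]
  have "bounded S"
  proof (cases "S = {}")
    case True then show ?thesis by simp
  next
    case False
    then obtain s0 where "s0 \<in> S" by auto
    moreover obtain D where "\<forall>s\<in>S. \<forall>t\<in>S. dist s t < D" using assms(2) by auto
    ultimately show ?thesis unfolding bounded_def by (meson less_imp_le)
  qed
  then have "compact (closure S)" by simp
  then have "seq_compact (closure S)" by (simp add: compact_imp_seq_compact)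
  from seq_compact_imp_totally_bounded[OF this] e
  obtain K where K: "finite K" "closure S \<subseteq> (\<Union>x\<in>K. ball x e)" by blast
  have KS: "S \<subseteq> (\<Union>x\<in>K. ball x e)" using K(2) closure_subset by blast
  define K' where "K' = {x\<in>K. \<exists>y\<in>S. dist x y < e}"
  define pick where "pick x = (SOME y. y \<in> S \<and> dist x y < e)" for x
  define F where "F = pick ` K'"
  have pick: "pick x \<in> S \<and> dist x (pick x) < e" if "x \<in> K'" for x
  proof -
    have "\<exists>y. y \<in> S \<and> dist x y < e" using that unfolding K'_def by auto
    then show ?thesis unfolding pick_def by (rule someI_ex)
  qed
  have F: "finite F" "F \<subseteq> S" using K(1) pick unfolding F_def K'_def by auto
  have Fnet: "\<exists>f\<in>F. dist s f < 2*e" if sS: "s \<in> S" for s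
  proof -
    obtain x where x0: "x \<in> K" "s \<in> ball x e" using KS sS by blast
    then have x: "x \<in> K" "dist x s < e" by auto
    then have "x \<in> K'" using sS unfolding K'_def by auto
    then have "pick x \<in> F" "dist x (pick x) < e" using pick[OF \<open>x \<in> K'\<close>] unfolding F_def by auto
    moreover have "dist s (pick x) \<le> dist s x + dist x (pick x)" by (rule dist_triangle)
    ultimately have "dist s (pick x) < 2*e" using x(2) by (simp add: dist_commute)
    then show ?thesis using \<open>pick x \<in> F\<close> by blast
  qed
  define h where "h n = (\<lambda>f\<in>F. SOME c. c \<in> K \<and> dist c ((U ^^ n) f) < e)" for n
  have hc: "h n f \<in> K \<and> dist (h n f) ((U ^^ n) f) < e" if "f \<in> F" for n f
  proof -
    have "(U ^^ n) f \<in> S" using mem F(2) that by auto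
    then obtain c where "c \<in> K" "(U ^^ n) f \<in> ball c e" using KS by blast
    then have "\<exists>c. c \<in> K \<and> dist c ((U ^^ n) f) < e" by auto
    then have "(SOME c. c \<in> K \<and> dist c ((U ^^ n) f) < e) \<in> K \<and> dist (SOME c. c \<in> K \<and> dist c ((U ^^ n) f) < e) ((U ^^ n) f) < e"
      by (rule someI_ex)
    then show ?thesis unfolding h_def using that by simp
  qed
  have "h ` UNIV \<subseteq> F \<rightarrow>\<^sub>E K" using hc unfolding h_def by auto
  moreover have "finite (F \<rightarrow>\<^sub>E K)" using K(1) F(1) by (simp add: finite_PiE)
  ultimately have "finite (h ` UNIV)" by (rule finite_subset)
  then have "\<not> inj h" using finite_imageD[of h UNIV] infinite_UNIV_nat by auto
  then obtain m n where mn0: "m \<noteq> n" "h m = h n" unfolding inj_def by blast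
  obtain a b where ab: "a < b" "h a = h b"
    using mn0 by (metis linorder_neqE_nat)
  define p where "p = b - a"
  have p: "p > 0" "b = p + a" using ab unfolding p_def by auto
  have close: "dist ((U ^^ p) f) f < 2*e" if "f \<in> F" for f
  proof -
    have fS: "f \<in> S" using that F(2) by auto
    have "dist ((U ^^ a) f) ((U ^^ b) f) \<le> dist ((U ^^ a) f) (h a f) + dist (h a f) ((U ^^ b) f)"
      by (rule dist_triangle)
    also have "\<dots> < e + e"
    proof (rule add_strict_mono)
      show "dist ((U ^^ a) f) (h a f) < e" using hc[OF that, of a] by (simp add: dist_commute)
      show "dist (h a f) ((U ^^ b) f) < e" using hc[OF that, of b] ab(2) by simp
    qed
    finally have 1: "dist ((U ^^ a) f) ((U ^^ b) f) < 2*e" by simp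
    have "b = a + p" using p(2) by simp
    then have "(U ^^ b) f = (U ^^ a) ((U ^^ p) f)"
      by (simp add: funpow_add)
    then have "dist ((U ^^ a) f) ((U ^^ b) f) = dist f ((U ^^ p) f)"
      using iso[OF fS mem[OF fS]] by simp
    then show ?thesis using 1 by (simp add: dist_commute)
  qed
  have "\<forall>s\<in>S. dist ((U ^^ p) s) s < \<epsilon>"
  proof
    fix s assume s: "s \<in> S"
    obtain f where f: "f \<in> F" "dist s f < 2*e" using Fnet s by auto
    have fS: "f \<in> S" using f F(2) by auto
    have "dist ((U ^^ p) s) s \<le> dist ((U ^^ p) s) ((U ^^ p) f) + dist ((U ^^ p) f) s"
      by (rule dist_triangle)
    also have "\<dots> \<le> dist ((U ^^ p) s) ((U ^^ p) f) + (dist ((U ^^ p) f) f + dist f s)"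
      using dist_triangle[of "(U ^^ p) f" s f] by linarith
    also have "\<dots> < 2*e + (2*e + 2*e)"
      using iso[OF s fS] f(2) close[OF f(1)] by (simp add: dist_commute)
    finally show "dist ((U ^^ p) s) s < \<epsilon>" unfolding e_def by simp
  qed
  then show "\<exists>n::nat. n > 0 \<and> (\<forall>s\<in>S. dist ((U ^^ n) s) s < \<epsilon>)" using p by blast
qed

end
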